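(* For every integer $s\ge2$, with $m=(2^{2s}-1)/3$, $$\lambda(m,4^s)\ \ge\ \frac{2^{2s}-1}{2^{3s}-3\cdot 2^{s-1}+1}\left(\frac{2^{2s-1}+2^s-1}{3}+2^{s-1}\sqrt m\right).$$
   Context: For a real Banach space $X$ and finite-dimensional subspace $Y$, $\lambda(Y,X)=\inf\{\|P\|\}$ over bounded linear projections $P:X\to Y$ (i.e. $P|_Y=\mathrm{Id}_Y$). For integers $n\ge m$, $\lambda(m,n):=\sup\{\lambda(Y,\ell_\infty^{(n)}): Y\subset\ell_\infty^{(n)},\ \dim Y=m\}$, where $\ell_\infty^{(n)}$ is $\mathbb{R}^n$ with the max norm. *)

theory Defs
  imports "HOL-Analysis.Analysis"
begin

definition linf :: "real ^ 'n \<Rightarrow> real" where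
  "linf x = Max (range (\<lambda>i. \<bar>x $ i\<bar>))"

definition linf_opnorm :: "(real ^ 'n \<Rightarrow> real ^ 'n) \<Rightarrow> real" where
  "linf_opnorm P = Sup ((\<lambda>x. linf (P x)) ` {x. linf x \<le> 1})"

definition is_projection_onto :: "(real ^ 'n) set \<Rightarrow> (real ^ 'n \<Rightarrow> real ^ 'n) \<Rightarrow> bool" where
  "is_projection_onto Y P \<longleftrightarrow> linear P \<and> range P \<subseteq> Y \<and> (\<forall>y\<in>Y. P y = y)"

definition proj_const :: "(real ^ 'n) set \<Rightarrow> real" where
  "proj_const Y = Inf (linf_opnorm ` {P. is_projection_onto Y P})"

text \<open>lambda(m, n) where n = CARD('n).\<close>
definition max_proj_const :: "nat \<Rightarrow> 'n::finite itself \<Rightarrow> real" where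
  "max_proj_const m _ = Sup (proj_const ` {Y :: (real ^ 'n) set. subspace Y \<and> dim Y = m})"

end

theory Submission
  imports Defs
begin


definition h1 :: "nat \<Rightarrow> nat \<Rightarrow> real" where
  "h1 a b = (-1) ^ ((a mod 2) * (b div 2) + (a div 2) * (b mod 2))"
definition sh :: "nat \<Rightarrow> real" where "sh d = (-1) ^ ((d mod 2) * (d div 2))"
definition se :: "nat \<Rightarrow> real" where "se d = (if d = 0 then 1 else -1)"

lemma four_cases: "(a::nat) < 4 \<Longrightarrow> a = 0 \<or> a = 1 \<or> a = 2 \<or> a = 3" by auto

lemma sum4: "(\<Sum>d<(4::nat). f d) = f 0 + f 1 + f 2 + (f 3 :: real)"
  by (simp add: eval_nat_numeral)

lemma B1: "a < 4 \<Longrightarrow> b < 4 \<Longrightarrow> (\<Sum>d<4. h1 a d * h1 d b) = (if a = b then 4 else 0)"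
  by (drule four_cases, drule four_cases) (auto simp: sum4 h1_def)
lemma B2: "a < 4 \<Longrightarrow> b < 4 \<Longrightarrow> (\<Sum>d<4. h1 a d * sh d * h1 d b) = 2 * sh a * sh b * h1 a b"
  by (drule four_cases, drule four_cases) (auto simp: sum4 h1_def sh_def)
lemma B3: "a < 4 \<Longrightarrow> b < 4 \<Longrightarrow> (\<Sum>d<4. h1 a d * se d * h1 d b) = - 2 * se a * se b * h1 a b"
  by (drule four_cases, drule four_cases) (auto simp: sum4 h1_def se_def)

lemma h1_sym: "h1 a b = h1 b a" by (simp add: h1_def add.commute mult.commute)
lemma h1_diag: "h1 a a = 1" by (simp add: h1_def mult.commute)
lemma h1_0: "h1 0 b = 1" by (simp add: h1_def)
lemma m1_pm: "(-1::real)^n = 1 \<or> (-1::real)^n = -1" by (cases "even n") auto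
lemma h1_pm: "h1 a b = 1 \<or> h1 a b = -1" unfolding h1_def by (rule m1_pm)
lemma sh_pm: "sh a = 1 \<or> sh a = -1" unfolding sh_def by (rule m1_pm)
lemma se_pm: "se a = 1 \<or> se a = -1" by (simp add: se_def)

primrec hsP :: "nat \<Rightarrow> nat \<Rightarrow> nat \<Rightarrow> real" where
  "hsP 0 x y = 1"
| "hsP (Suc j) x y = h1 (x mod 4) (y mod 4) * hsP j (x div 4) (y div 4)"

primrec tau :: "nat \<Rightarrow> nat \<Rightarrow> real" where
  "tau 0 x = 1"
| "tau (Suc j) x = sh (x mod 4) * tau j (x div 4)"

lemma hsP_sym: "hsP j x y = hsP j y x"
  by (induction j arbitrary: x y) (simp_all add: h1_sym)
lemma hsP_diag: "hsP j x x = 1"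
  by (induction j arbitrary: x) (simp_all add: h1_diag)
lemma hsP_0: "hsP j 0 y = 1"
  by (induction j arbitrary: y) (simp_all add: h1_0)
lemma hsP_pm: "hsP j x y = 1 \<or> hsP j x y = -1"
  by (induction j arbitrary: x y) (simp_all, metis h1_pm mult_1 mult_minus1 minus_minus)
lemma tau_pm: "tau j x = 1 \<or> tau j x = -1"
  by (induction j arbitrary: x) (simp_all, metis sh_pm mult_1 mult_minus1 minus_minus)

lemma sum_split4: "(\<Sum>z<4*(N::nat). f z) = (\<Sum>z<N. \<Sum>d<4. f (4*z+d) :: real)"
proof (induction N)
  case 0 then show ?case by simp
next
  case (Suc N)
  have "{..<4 * Suc N} = {..<4*N} \<union> {4*N..<4*N+4}" by auto
  then have "(\<Sum>z<4 * Suc N. f z) = (\<Sum>z<4*N. f z) + (\<Sum>z\<in>{4*N..<4*N+4}. f z)"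
    by (simp add: sum.union_disjoint ivl_disj_int)
  also have "(\<Sum>z\<in>{4*N..<4*N+4}. f z) = (\<Sum>d<4. f (4*N+d))"
    by (simp add: sum4 eval_nat_numeral add.commute)
  finally show ?case using Suc by simp
qed

lemma split_idx: "(x::nat) < 4 * N \<Longrightarrow> x mod 4 < 4 \<and> x div 4 < N" by auto

lemma R1: "x < 4^j \<Longrightarrow> y < 4^j \<Longrightarrow>
   (\<Sum>z<4^j. hsP j x z * hsP j z y) = (if x = y then 4^j else 0)"
proof (induction j arbitrary: x y)
  case 0 then show ?case by simp
next
  case (Suc j)
  have xa: "x mod 4 < 4" "x div 4 < 4^j" "y mod 4 < 4" "y div 4 < 4^j"
    using Suc.prems by (auto simp: less_mult_imp_div_less)
  have "(\<Sum>z<4^Suc j. hsP (Suc j) x z * hsP (Suc j) z y)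
      = (\<Sum>z<4^j. \<Sum>d<4. hsP (Suc j) x (4*z+d) * hsP (Suc j) (4*z+d) y)"
    by (simp add: sum_split4 power_Suc)
  also have "\<dots> = (\<Sum>z<4^j. hsP j (x div 4) z * hsP j z (y div 4) * (\<Sum>d<4. h1 (x mod 4) d * h1 d (y mod 4)))"
    by (intro sum.cong refl) (simp add: sum_distrib_left sum4 algebra_simps)
  also have "\<dots> = (\<Sum>z<4^j. hsP j (x div 4) z * hsP j z (y div 4)) * (if x mod 4 = y mod 4 then 4 else 0)"
    by (simp add: B1 xa sum_distrib_right)
  also have "\<dots> = (if x = y then 4^Suc j else 0)"
    using Suc.IH[OF xa(2) xa(4)] by (auto simp: power_Suc) (metis div_mod_decomp)
  finally show ?case .
qed

lemma R2: "x < 4^j \<Longrightarrow> y < 4^j \<Longrightarrow>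
   (\<Sum>z<4^j. hsP j x z * tau j z * hsP j z y) = 2^j * tau j x * tau j y * hsP j x y"
proof (induction j arbitrary: x y)
  case 0 then show ?case by simp
next
  case (Suc j)
  have xa: "x mod 4 < 4" "x div 4 < 4^j" "y mod 4 < 4" "y div 4 < 4^j"
    using Suc.prems by (auto simp: less_mult_imp_div_less)
  have "(\<Sum>z<4^Suc j. hsP (Suc j) x z * tau (Suc j) z * hsP (Suc j) z y)
      = (\<Sum>z<4^j. \<Sum>d<4. hsP (Suc j) x (4*z+d) * tau (Suc j) (4*z+d) * hsP (Suc j) (4*z+d) y)"
    by (simp add: sum_split4 power_Suc)
  also have "\<dots> = (\<Sum>z<4^j. hsP j (x div 4) z * tau j z * hsP j z (y div 4) * (\<Sum>d<4. h1 (x mod 4) d * sh d * h1 d (y mod 4)))"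
    by (intro sum.cong refl) (simp add: sum_distrib_left sum4 algebra_simps)
  also have "\<dots> = (\<Sum>z<4^j. hsP j (x div 4) z * tau j z * hsP j z (y div 4)) * (2 * sh (x mod 4) * sh (y mod 4) * h1 (x mod 4) (y mod 4))"
    by (simp add: B2 xa sum_distrib_right)
  also have "\<dots> = 2^Suc j * tau (Suc j) x * tau (Suc j) y * hsP (Suc j) x y"
    using Suc.IH[OF xa(2) xa(4)] by (simp add: power_Suc algebra_simps)
  finally show ?case .
qed




definition phiG :: "real \<Rightarrow> real \<Rightarrow> real \<Rightarrow> real \<Rightarrow> real \<Rightarrow> real" where
  "phiG a0 a1 be u v = (if u = 1 \<and> v = 1 then a0 else if u = -1 \<and> v = -1 then -a1 else be)"
definition phiE :: "real \<Rightarrow> real \<Rightarrow> real" where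
  "phiE u v = (if u = -1 \<and> v = -1 then -1 else 1)"
definition wt :: "real \<Rightarrow> real \<Rightarrow> real \<Rightarrow> real" where "wt wa wb t = (if t = 1 then wa else wb)"

locale kdat =
  fixes k r a0 a1 be wa wb mu :: real
  assumes h0: "a0*(k+1) = 1" and h1: "a1*(k-1) = 1" and hb: "be*r = 1" and hr: "3*r^2 = k^2-1"
    and hwa: "wa = k*(k+1)/2 - (2+k/2)*r" and hwb: "wb = k*(k-1)/2 - (k/2)*r"
    and hmu: "mu = wa*k/2 + wb*(k*(k+1)/2)*be"
begin

abbreviation "P \<equiv> phiG a0 a1 be"
abbreviation "W \<equiv> wt wa wb"

lemma G_diag:
  assumes u: "u = 1 \<or> u = -1"
  shows "(P u 1 * P 1 u + P u (-1) * P (-1) u)/2 * k^2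
       - (P u 1 * P 1 u - P u (-1) * P (-1) u)/2 * k * u * u * 1
       + (1 - P u u) * (1 * P u u) + (1 - P u u) * (1 * P u u) + (1 - P u u) * (1 - P u u) = k^2 * be^2 * 1"
  using u h0 h1 hb hr
  apply (elim disjE)
  apply (simp_all add: phiG_def field_simps)
  apply algebra+
  done

lemma G_off:
  assumes u: "u = 1 \<or> u = -1" and v: "v = 1 \<or> v = -1"
  shows "(P u 1 * P 1 v + P u (-1) * P (-1) v)/2 * 0
       - (P u 1 * P 1 v - P u (-1) * P (-1) v)/2 * k * u * v * h
       + (1 - P u u) * (h * P u v) + (1 - P v v) * (h * P u v) + 0 = k^2 * be^2 * (h * P u v)"
  using u v h0 h1 hb hr
  apply (elim disjE)
  apply (simp_all add: phiG_def field_simps)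
  apply algebra+
  done

lemma A_diag:
  assumes u: "u = 1 \<or> u = -1"
  shows "(phiE u 1 * W 1 * P 1 u + phiE u (-1) * W (-1) * P (-1) u)/2 * k^2
       - (phiE u 1 * W 1 * P 1 u - phiE u (-1) * W (-1) * P (-1) u)/2 * k * u * u * 1
       + ((1 - phiE u u) * W u) * (1 * P u u) + (1 - P u u) * (1 * (phiE u u * W u))
       + ((1 - phiE u u) * W u) * (1 - P u u) = mu * 1"
  using u h0 h1 hb hr hwa hwb hmu
  apply (elim disjE)
  apply (simp_all add: phiG_def phiE_def wt_def field_simps)
  apply algebra+
  done

lemma A_off:
  assumes u: "u = 1 \<or> u = -1" and v: "v = 1 \<or> v = -1"
  shows "(phiE u 1 * W 1 * P 1 v + phiE u (-1) * W (-1) * P (-1) v)/2 * 0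
       - (phiE u 1 * W 1 * P 1 v - phiE u (-1) * W (-1) * P (-1) v)/2 * k * u * v * h
       + ((1 - phiE u u) * W u) * (h * P u v) + (1 - P v v) * (h * (phiE u v * W v)) + 0
       = mu * (h * P u v)"
  using u v h0 h1 hb hr hwa hwb hmu
  apply (elim disjE)
  apply (simp_all add: phiG_def phiE_def wt_def field_simps)
  apply algebra+
  done

end



lemma linf_ge: "\<bar>x $ i\<bar> \<le> linf x"
  unfolding linf_def by (rule Max_ge) auto

lemma linf_nonneg: "0 \<le> linf x"
  using linf_ge[of x undefined] by linarith

lemma linf_le: "(\<And>i. \<bar>x $ i\<bar> \<le> c) \<Longrightarrow> linf x \<le> c"
  unfolding linf_def by (subst Max_le_iff) auto

lemma linf_le_norm: "linf x \<le> norm x"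
  by (rule linf_le) (simp add: component_le_norm_cart)

lemma norm_le_linf: "norm (x::real^'n) \<le> sqrt (real CARD('n)) * linf x"
proof -
  have "norm x = sqrt (\<Sum>i\<in>UNIV. (x $ i)^2)"
    by (simp add: norm_vec_def L2_set_def)
  also have "\<dots> \<le> sqrt (\<Sum>i\<in>(UNIV::'n set). (linf x)^2)"
  proof (rule real_sqrt_le_mono, rule sum_mono)
    fix i show "(x $ i)^2 \<le> (linf x)^2"
      using linf_ge[of x i] by (metis abs_ge_zero power2_abs power_mono)
  qed
  also have "\<dots> = sqrt (real CARD('n)) * linf x"
    by (simp add: real_sqrt_mult linf_nonneg)
  finally show ?thesis .
qed

lemma linear_linf_bound:
  fixes P :: "real^'n \<Rightarrow> real^'n"
  assumes "linear P"
  shows "\<exists>C. \<forall>x. linf x \<le> 1 \<longrightarrow> linf (P x) \<le> C"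
proof -
  obtain B where B: "\<And>x. norm (P x) \<le> B * norm x"
    using linear_bounded[OF assms] by blast
  have "linf (P x) \<le> \<bar>B\<bar> * sqrt (real CARD('n))" if "linf x \<le> 1" for x
  proof -
    have "linf (P x) \<le> B * norm x" using linf_le_norm B order_trans by blast
    also have "\<dots> \<le> \<bar>B\<bar> * norm x" by (simp add: mult_right_mono)
    also have "\<dots> \<le> \<bar>B\<bar> * (sqrt (real CARD('n)) * linf x)"
      by (simp add: mult_left_mono norm_le_linf)
    also have "\<dots> \<le> \<bar>B\<bar> * (sqrt (real CARD('n)) * 1)"
      by (intro mult_left_mono that) auto
    finally show ?thesis by simp
  qed
  then show ?thesis by blast
qed

lemma bdd_opnorm: fixes P :: "real^'n \<Rightarrow> real^'n" shows "linear P \<Longrightarrow> bdd_above ((\<lambda>x. linf (P x)) ` {x. linf x \<le> 1})"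
  using linear_linf_bound[of P] by (auto simp: bdd_above_def)

lemma linf_zero: "linf 0 = 0"
  by (metis linf_le linf_nonneg antisym abs_zero order_refl zero_index)

lemma opnorm_ge: fixes P :: "real^'n \<Rightarrow> real^'n" shows "linear P \<Longrightarrow> linf x \<le> 1 \<Longrightarrow> linf (P x) \<le> linf_opnorm P"
  unfolding linf_opnorm_def by (rule cSup_upper) (auto simp: bdd_opnorm)

lemma opnorm_nonneg: fixes P :: "real^'n \<Rightarrow> real^'n" shows "linear P \<Longrightarrow> 0 \<le> linf_opnorm P"
  using opnorm_ge[of P 0] by (simp add: linf_zero linear_0)

lemma opnorm_le: "(\<And>x. linf x \<le> 1 \<Longrightarrow> linf (P x) \<le> C) \<Longrightarrow> linf_opnorm P \<le> C"
  unfolding linf_opnorm_def by (rule cSup_least) (auto intro: exI[of _ 0] simp: linf_zero)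

lemma onb_expansion:
  fixes B :: "(real^'n) set"
  assumes fin: "finite B" and orth: "pairwise orthogonal B" and nrm: "\<And>b. b \<in> B \<Longrightarrow> norm b = 1"
    and y: "y \<in> span B"
  shows "y = (\<Sum>b\<in>B. (y \<bullet> b) *\<^sub>R b)"
proof -
  have ip: "(\<Sum>b\<in>B. (y \<bullet> b) *\<^sub>R b) \<bullet> b0 = y \<bullet> b0" if "b0 \<in> B" for b0
  proof -
    have "(\<Sum>b\<in>B. (y \<bullet> b) *\<^sub>R b) \<bullet> b0 = (\<Sum>b\<in>B. (y \<bullet> b) * (b \<bullet> b0))"
      by (simp add: inner_sum_left)
    also have "\<dots> = (\<Sum>b\<in>B. if b = b0 then y \<bullet> b0 else 0)"
    proof (rule sum.cong[OF refl])
      fix b assume "b \<in> B"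
      show "(y \<bullet> b) * (b \<bullet> b0) = (if b = b0 then y \<bullet> b0 else 0)"
      proof (cases "b = b0")
        case True
        then have "b \<bullet> b0 = 1" using nrm[OF that] by (simp add: dot_square_norm)
        then show ?thesis using True by simp
      next
        case False
        then have "b \<bullet> b0 = 0" using orth \<open>b \<in> B\<close> that by (auto simp: pairwise_def orthogonal_def)
        then show ?thesis using False by simp
      qed
    qed
    also have "\<dots> = y \<bullet> b0" using fin that by simp
    finally show ?thesis .
  qed
  define d where "d = y - (\<Sum>b\<in>B. (y \<bullet> b) *\<^sub>R b)"
  have "d \<in> span B"
    unfolding d_def by (intro span_diff y span_sum span_mul span_base) 
  moreover have "orthogonal d b" if "b \<in> B" for b
    using ip[OF that] by (simp add: d_def orthogonal_def inner_diff_left)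
  ultimately have "orthogonal d d"
    by (meson orthogonal_to_span)
  then have "d = 0" using orthogonal_self by blast
  then show ?thesis by (simp add: d_def)
qed

definition onbproj :: "(real^'n) set \<Rightarrow> real^'n \<Rightarrow> real^'n" where
  "onbproj B x = (\<Sum>b\<in>B. (x \<bullet> b) *\<^sub>R b)"

lemma onbproj_linear: "linear (onbproj B)"
  unfolding onbproj_def
  by (rule linearI) (simp_all add: inner_add_left scaleR_add_left sum.distrib scaleR_sum_right)

lemma onbproj_inner:
  fixes B :: "(real^'n) set"
  assumes fin: "finite B" and orth: "pairwise orthogonal B" and nrm: "\<And>b. b \<in> B \<Longrightarrow> norm b = 1"
    and "b0 \<in> B"
  shows "onbproj B x \<bullet> b0 = x \<bullet> b0"
proof -
  have "onbproj B x \<bullet> b0 = (\<Sum>b\<in>B. (x \<bullet> b) * (b \<bullet> b0))"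
    by (simp add: onbproj_def inner_sum_left)
  also have "\<dots> = (\<Sum>b\<in>B. if b = b0 then x \<bullet> b0 else 0)"
  proof (rule sum.cong[OF refl])
    fix b assume "b \<in> B"
    show "(x \<bullet> b) * (b \<bullet> b0) = (if b = b0 then x \<bullet> b0 else 0)"
    proof (cases "b = b0")
      case True
      then have "b \<bullet> b0 = 1" using nrm[OF assms(4)] by (simp add: dot_square_norm)
      then show ?thesis using True by simp
    next
      case False
      then have "b \<bullet> b0 = 0" using orth \<open>b \<in> B\<close> assms(4) by (auto simp: pairwise_def orthogonal_def)
      then show ?thesis using False by simp
    qed
  qed
  also have "\<dots> = x \<bullet> b0" using fin assms(4) by simp
  finally show ?thesis .
qed

lemma onbproj_norm:
  fixes B :: "(real^'n) set"
  assumes fin: "finite B" and orth: "pairwise orthogonal B" and nrm: "\<And>b. b \<in> B \<Longrightarrow> norm b = 1"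
  shows "norm (onbproj B x) \<le> norm x"
proof -
  let ?p = "onbproj B x"
  have "?p \<bullet> ?p = (\<Sum>b\<in>B. (x \<bullet> b) * (b \<bullet> ?p))"
    by (simp add: onbproj_def inner_sum_left)
  also have "\<dots> = (\<Sum>b\<in>B. (x \<bullet> b) * (x \<bullet> b))"
    using onbproj_inner[OF fin orth nrm] by (simp add: inner_commute)
  also have "\<dots> = x \<bullet> ?p"
    by (simp add: onbproj_def inner_sum_right)
  also have "\<dots> \<le> norm x * norm ?p" by (rule norm_cauchy_schwarz)
  finally have "norm ?p ^ 2 \<le> norm x * norm ?p" by (simp add: dot_square_norm)
  then show ?thesis
    by (cases "norm ?p = 0") (auto simp: power2_eq_square)
qed

lemma exists_onb:
  fixes Y :: "(real^'n) set"
  assumes "subspace Y"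
  obtains B where "finite B" "pairwise orthogonal B" "\<And>b. b \<in> B \<Longrightarrow> norm b = 1"
    "card B = dim Y" "span B = Y"
  using orthonormal_basis_subspace[OF assms] by (metis independent_imp_finite)

lemma onbproj_is_proj:
  fixes B :: "(real^'n) set"
  assumes fin: "finite B" and orth: "pairwise orthogonal B" and nrm: "\<And>b. b \<in> B \<Longrightarrow> norm b = 1"
    and sp: "span B = Y"
  shows "is_projection_onto Y (onbproj B)"
  unfolding is_projection_onto_def
proof (intro conjI ballI subsetI)
  show "linear (onbproj B)" by (rule onbproj_linear)
  fix z assume "z \<in> range (onbproj B)"
  then obtain x where "z = onbproj B x" by auto
  have "onbproj B x \<in> span B" unfolding onbproj_def
    by (intro span_sum span_scale span_base)
  then show "z \<in> Y" using sp \<open>z = onbproj B x\<close> by simp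
next
  fix y assume "y \<in> Y"
  then show "onbproj B y = y"
    using onb_expansion[OF fin orth nrm, of y] sp by (simp add: onbproj_def)
qed

lemma proj_const_upper:
  fixes Y :: "(real^'n) set"
  assumes "subspace Y"
  shows "proj_const Y \<le> sqrt (real CARD('n))"
proof -
  obtain B where B: "finite B" "pairwise orthogonal B" "\<And>b. b \<in> B \<Longrightarrow> norm b = 1"
    "card B = dim Y" "span B = Y"
    using exists_onb[OF assms] by blast
  have pr: "is_projection_onto Y (onbproj B)" using onbproj_is_proj[OF B(1,2,3,5)] .
  have "linf_opnorm (onbproj B) \<le> sqrt (real CARD('n))"
  proof (rule opnorm_le)
    fix x :: "real^'n" assume "linf x \<le> 1"
    have "linf (onbproj B x) \<le> norm (onbproj B x)" by (rule linf_le_norm)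
    also have "\<dots> \<le> norm x" using onbproj_norm[OF B(1,2,3)] .
    also have "\<dots> \<le> sqrt (real CARD('n)) * linf x" by (rule norm_le_linf)
    also have "\<dots> \<le> sqrt (real CARD('n)) * 1" by (intro mult_left_mono \<open>linf x \<le> 1\<close>) auto
    finally show "linf (onbproj B x) \<le> sqrt (real CARD('n))" by simp
  qed
  moreover have "proj_const Y \<le> linf_opnorm (onbproj B)"
    unfolding proj_const_def
    by (rule cInf_lower) (use pr in \<open>auto simp: bdd_below_def is_projection_onto_def intro!: exI[of _ 0] opnorm_nonneg\<close>)
  ultimately show ?thesis by linarith
qed

lemma bdd_max_proj: "bdd_above (proj_const ` {Y :: (real^'n) set. subspace Y \<and> dim Y = m})"
  using proj_const_upper by (auto simp: bdd_above_def intro!: exI[of _ "sqrt (real CARD('n))"])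

lemma vec_expansion: "(\<Sum>i\<in>UNIV. (x $ i) *\<^sub>R axis i (1::real)) = (x::real^'n)"
  using basis_expansion[of x] by (simp add: scalar_mult_eq_scaleR)

lemma linear_expansion:
  fixes Q :: "real^'n \<Rightarrow> real^'n"
  assumes "linear Q"
  shows "Q x = (\<Sum>i\<in>UNIV. (x $ i) *\<^sub>R Q (axis i 1))"
proof -
  have "Q x = Q (\<Sum>i\<in>UNIV. (x $ i) *\<^sub>R axis i 1)" by (simp add: vec_expansion)
  also have "\<dots> = (\<Sum>i\<in>UNIV. (x $ i) *\<^sub>R Q (axis i 1))"
    using assms by (simp add: linear_sum linear_scale)
  finally show ?thesis .
qed

lemma trace_proj:
  fixes Y :: "(real^'n) set" and Q :: "real^'n \<Rightarrow> real^'n"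
  assumes Y: "subspace Y" and Q: "is_projection_onto Y Q"
  shows "(\<Sum>i\<in>UNIV. Q (axis i 1) $ i) = real (dim Y)"
proof -
  obtain B where B: "finite B" "pairwise orthogonal B" "\<And>b. b \<in> B \<Longrightarrow> norm b = 1"
    "card B = dim Y" "span B = Y"
    using exists_onb[OF Y] by blast
  have lin: "linear Q" and rng: "\<And>x. Q x \<in> Y" and fx: "\<And>y. y \<in> Y \<Longrightarrow> Q y = y"
    using Q by (auto simp: is_projection_onto_def)
  have ex: "Q (axis i 1) = (\<Sum>b\<in>B. (Q (axis i 1) \<bullet> b) *\<^sub>R b)" for i
    using onb_expansion[OF B(1,2,3)] rng B(5) by blast
  have comp: "Q (axis i 1) $ i = (\<Sum>b\<in>B. (Q (axis i 1) \<bullet> b) * b $ i)" for i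
  proof -
    have "Q (axis i 1) $ i = (\<Sum>b\<in>B. (Q (axis i 1) \<bullet> b) *\<^sub>R b) $ i"
      using ex[of i] by (rule arg_cong)
    also have "\<dots> = (\<Sum>b\<in>B. (Q (axis i 1) \<bullet> b) * b $ i)"
      by (simp add: sum_component)
    finally show ?thesis .
  qed
  have "(\<Sum>i\<in>UNIV. Q (axis i 1) $ i) = (\<Sum>i\<in>UNIV. \<Sum>b\<in>B. (Q (axis i 1) \<bullet> b) * b $ i)"
    by (rule sum.cong[OF refl], rule comp)
  also have "\<dots> = (\<Sum>b\<in>B. \<Sum>i\<in>UNIV. (Q (axis i 1) \<bullet> b) * b $ i)"
    by (rule sum.swap)
  also have "\<dots> = (\<Sum>b\<in>B. Q b \<bullet> b)"
  proof (rule sum.cong[OF refl])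
    fix b assume "b \<in> B"
    have "Q b = (\<Sum>i\<in>UNIV. (b $ i) *\<^sub>R Q (axis i 1))" by (rule linear_expansion[OF lin])
    then have "Q b \<bullet> b = (\<Sum>i\<in>UNIV. (b $ i) * (Q (axis i 1) \<bullet> b))"
      by (simp add: inner_sum_left)
    then show "(\<Sum>i\<in>UNIV. (Q (axis i 1) \<bullet> b) * b $ i) = Q b \<bullet> b"
      by (simp add: mult.commute)
  qed
  also have "\<dots> = (\<Sum>b\<in>B. 1)"
  proof (rule sum.cong[OF refl])
    fix b assume b: "b \<in> B"
    then have "b \<in> Y" using B(5) span_base by blast
    then have "Q b = b" by (rule fx)
    then show "Q b \<bullet> b = 1" using B(3)[OF b] by (simp add: dot_square_norm)
  qed
  also have "\<dots> = real (dim Y)" using B(4) by simp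
  finally show ?thesis .
qed

lemma rowsum_le_opnorm:
  fixes Q :: "real^'n \<Rightarrow> real^'n"
  assumes "linear Q"
  shows "(\<Sum>i\<in>UNIV. \<bar>Q (axis i 1) $ j\<bar>) \<le> linf_opnorm Q"
proof -
  define z :: "real^'n" where "z = (\<chi> i. sgn (Q (axis i 1) $ j))"
  have "linf z \<le> 1" unfolding z_def by (rule linf_le) (simp add: abs_sgn_eq)
  have "Q z $ j = (\<Sum>i\<in>UNIV. (z $ i) * Q (axis i 1) $ j)"
    by (subst linear_expansion[OF assms]) (simp add: sum_component)
  also have "\<dots> = (\<Sum>i\<in>UNIV. \<bar>Q (axis i 1) $ j\<bar>)"
    by (rule sum.cong) (auto simp: z_def sgn_if)
  finally have "(\<Sum>i\<in>UNIV. \<bar>Q (axis i 1) $ j\<bar>) \<le> linf (Q z)"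
    using linf_ge[of "Q z" j] by linarith
  also have "\<dots> \<le> linf_opnorm Q" by (rule opnorm_ge[OF assms \<open>linf z \<le> 1\<close>])
  finally show ?thesis .
qed

lemma lower_bound_lemma:
  fixes Y :: "(real^'n) set" and Em :: "'n \<Rightarrow> 'n \<Rightarrow> real" and cw :: "'n \<Rightarrow> real"
  assumes Y: "subspace Y"
    and Eb: "\<And>i j. \<bar>Em i j\<bar> \<le> 1"
    and cw: "\<And>j. 0 \<le> cw j" "(\<Sum>j\<in>UNIV. cw j) = 1"
    and inv: "\<And>y i. y \<in> Y \<Longrightarrow> (\<Sum>j\<in>UNIV. Em i j * cw j * y $ j) = \<mu> * y $ i"
    and ex: "\<exists>P. is_projection_onto Y P"
  shows "\<mu> * real (dim Y) \<le> proj_const Y"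
  unfolding proj_const_def
proof (rule cInf_greatest)
  show "linf_opnorm ` {P. is_projection_onto Y P} \<noteq> {}" using ex by auto
next
  fix v assume "v \<in> linf_opnorm ` {P. is_projection_onto Y P}"
  then obtain Q where Q: "is_projection_onto Y Q" and v: "v = linf_opnorm Q" by auto
  have lin: "linear Q" and rng: "\<And>x. Q x \<in> Y" using Q by (auto simp: is_projection_onto_def)
  have "\<mu> * real (dim Y) = \<mu> * (\<Sum>i\<in>UNIV. Q (axis i 1) $ i)"
    using trace_proj[OF Y Q] by simp
  also have "\<dots> = (\<Sum>i\<in>UNIV. \<Sum>j\<in>UNIV. Em i j * cw j * Q (axis i 1) $ j)"
    by (simp add: inv[OF rng] sum_distrib_left)
  also have "\<dots> = (\<Sum>j\<in>UNIV. cw j * (\<Sum>i\<in>UNIV. Em i j * Q (axis i 1) $ j))"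
    by (subst sum.swap) (simp add: sum_distrib_left algebra_simps)
  also have "\<dots> \<le> (\<Sum>j\<in>UNIV. cw j * linf_opnorm Q)"
  proof (rule sum_mono, rule mult_left_mono[OF _ cw(1)])
    fix j
    have "(\<Sum>i\<in>UNIV. Em i j * Q (axis i 1) $ j) \<le> (\<Sum>i\<in>UNIV. \<bar>Q (axis i 1) $ j\<bar>)"
    proof (rule sum_mono)
      fix i
      have "Em i j * Q (axis i 1) $ j \<le> \<bar>Em i j\<bar> * \<bar>Q (axis i 1) $ j\<bar>"
        by (metis abs_ge_self abs_mult)
      also have "\<dots> \<le> 1 * \<bar>Q (axis i 1) $ j\<bar>" by (intro mult_right_mono Eb) auto
      finally show "Em i j * Q (axis i 1) $ j \<le> \<bar>Q (axis i 1) $ j\<bar>" by simp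
    qed
    also have "\<dots> \<le> linf_opnorm Q" by (rule rowsum_le_opnorm[OF lin])
    finally show "(\<Sum>i\<in>UNIV. Em i j * Q (axis i 1) $ j) \<le> linf_opnorm Q" .
  qed
  also have "\<dots> = linf_opnorm Q" using cw(2) by (simp add: sum_distrib_right[symmetric])
  finally show "\<mu> * real (dim Y) \<le> v" using v by simp
qed




definition sg :: "nat \<Rightarrow> nat \<Rightarrow> real" where "sg j x = se (x mod 4) * tau j (x div 4)"

lemma sg_pm: "sg j x = 1 \<or> sg j x = -1"
  unfolding sg_def using se_pm[of "x mod 4"] tau_pm[of j "x div 4"] by auto

lemma tau_0: "tau j 0 = 1" by (induction j) (simp_all add: sh_def)
lemma sg_0: "sg j 0 = 1" by (simp add: sg_def se_def tau_0)

lemma R2m: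
  assumes "x < 4^Suc j" "y < 4^Suc j"
  shows "(\<Sum>z<4^Suc j. hsP (Suc j) x z * sg j z * hsP (Suc j) z y)
         = - (2^Suc j) * sg j x * sg j y * hsP (Suc j) x y"
proof -
  have xa: "x mod 4 < 4" "x div 4 < 4^j" "y mod 4 < 4" "y div 4 < 4^j"
    using assms by (auto simp: less_mult_imp_div_less)
  have "(\<Sum>z<4^Suc j. hsP (Suc j) x z * sg j z * hsP (Suc j) z y)
      = (\<Sum>z<4^j. \<Sum>d<4. hsP (Suc j) x (4*z+d) * sg j (4*z+d) * hsP (Suc j) (4*z+d) y)"
    by (simp add: sum_split4 power_Suc)
  also have "\<dots> = (\<Sum>z<4^j. hsP j (x div 4) z * tau j z * hsP j z (y div 4) * (\<Sum>d<4. h1 (x mod 4) d * se d * h1 d (y mod 4)))"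
    by (intro sum.cong refl) (simp add: sg_def sum_distrib_left sum4 algebra_simps)
  also have "\<dots> = (\<Sum>z<4^j. hsP j (x div 4) z * tau j z * hsP j z (y div 4)) * (- 2 * se (x mod 4) * se (y mod 4) * h1 (x mod 4) (y mod 4))"
    by (simp add: B3 xa sum_distrib_right sum_negf)
  also have "\<dots> = - (2^Suc j) * sg j x * sg j y * hsP (Suc j) x y"
    using R2[OF xa(2) xa(4)] by (simp add: sg_def power_Suc algebra_simps)
  finally show ?thesis .
qed

declare hsP.simps(2)[simp del]

lemma affine_pm: "u = 1 \<or> u = -1 \<Longrightarrow> g u = (g 1 + g (-1))/2 + (g 1 - g (-1))/2 * (u::real)"
  by (elim disjE) (simp_all add: field_simps)

lemma SUMG:
  assumes "x < 4^Suc j" "y < 4^Suc j"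
  shows "(\<Sum>z<4^Suc j. hsP (Suc j) x z * hsP (Suc j) z y * g (sg j z))
       = (g 1 + g (-1))/2 * (if x = y then 4^Suc j else 0)
         - (g 1 - g (-1))/2 * 2^Suc j * sg j x * sg j y * hsP (Suc j) x y"
proof -
  have "(\<Sum>z<4^Suc j. hsP (Suc j) x z * hsP (Suc j) z y * g (sg j z))
      = (\<Sum>z<4^Suc j. (g 1 + g (-1))/2 * (hsP (Suc j) x z * hsP (Suc j) z y)
                     + (g 1 - g (-1))/2 * (hsP (Suc j) x z * sg j z * hsP (Suc j) z y))"
    by (intro sum.cong refl, subst affine_pm[OF sg_pm, of g]) (simp add: algebra_simps)
  also have "\<dots> = (g 1 + g (-1))/2 * (\<Sum>z<4^Suc j. hsP (Suc j) x z * hsP (Suc j) z y)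
                 + (g 1 - g (-1))/2 * (\<Sum>z<4^Suc j. hsP (Suc j) x z * sg j z * hsP (Suc j) z y)"
    by (simp add: sum.distrib sum_distrib_left)
  also have "\<dots> = (g 1 + g (-1))/2 * (if x = y then 4^Suc j else 0)
         - (g 1 - g (-1))/2 * 2^Suc j * sg j x * sg j y * hsP (Suc j) x y"
    unfolding R1[OF assms] R2m[OF assms] by simp
  finally show ?thesis .
qed

lemma sum_expand:
  assumes "finite S" "x \<in> S" "y \<in> S"
  shows "(\<Sum>z\<in>S. (A z + (if z = x then e else 0)) * (B z + (if z = y then f else 0)))
       = (\<Sum>z\<in>S. A z * B z) + e * B x + f * A y + (if x = y then e * f else (0::real))"
proof -
  have "(\<Sum>z\<in>S. (A z + (if z = x then e else 0)) * (B z + (if z = y then f else 0)))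
      = (\<Sum>z\<in>S. A z * B z + ((if z = x then e * B z else 0) + ((if z = y then f * A z else 0)
            + (if z = x then (if x = y then e * f else 0) else 0))))"
    by (intro sum.cong refl) (auto simp: algebra_simps)
  also have "\<dots> = (\<Sum>z\<in>S. A z * B z) + ((\<Sum>z\<in>S. if z = x then e * B z else 0)
       + ((\<Sum>z\<in>S. if z = y then f * A z else 0) + (\<Sum>z\<in>S. if z = x then (if x = y then e * f else 0) else 0)))"
    by (simp only: sum.distrib)
  also have "\<dots> = (\<Sum>z\<in>S. A z * B z) + e * B x + f * A y + (if x = y then e * f else 0)"
    using assms by (simp only: sum.delta) simp
  finally show ?thesis .
qed

definition Gn :: "real \<Rightarrow> real \<Rightarrow> real \<Rightarrow> nat \<Rightarrow> nat \<Rightarrow> nat \<Rightarrow> real" where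
  "Gn a0 a1 be j x y = (if x = y then 1 else hsP (Suc j) x y * phiG a0 a1 be (sg j x) (sg j y))"
definition En :: "nat \<Rightarrow> nat \<Rightarrow> nat \<Rightarrow> real" where
  "En j x y = (if x = y then 1 else hsP (Suc j) x y * phiE (sg j x) (sg j y))"

lemma Gn_split1: "Gn a0 a1 be j x z = hsP (Suc j) x z * phiG a0 a1 be (sg j x) (sg j z)
    + (if z = x then 1 - phiG a0 a1 be (sg j x) (sg j x) else 0)"
  by (cases "z = x") (auto simp: Gn_def hsP_diag)
lemma Gn_split2: "Gn a0 a1 be j z y = hsP (Suc j) z y * phiG a0 a1 be (sg j z) (sg j y)
    + (if z = y then 1 - phiG a0 a1 be (sg j y) (sg j y) else 0)"
  by (cases "z = y") (auto simp: Gn_def hsP_diag)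
lemma En_split: "En j x z * wt wa wb (sg j z) = hsP (Suc j) x z * (phiE (sg j x) (sg j z) * wt wa wb (sg j z))
    + (if z = x then (1 - phiE (sg j x) (sg j x)) * wt wa wb (sg j x) else 0)"
  by (cases "z = x") (auto simp: En_def hsP_diag algebra_simps)

lemma sq_pm: "u = 1 \<or> u = -1 \<Longrightarrow> u * u = (1::real)" by auto

lemma pow4: "(4::real)^Suc j = (2^Suc j)^2"
  by (metis power_mult_distrib power2_eq_square power_mult mult.commute numeral_Bit0_eq_double mult_2 numeral_times_numeral semiring_norm(12) power_even_eq)

context kdat
begin

lemma G2d:
  assumes kk: "k = 2^Suc j" and x: "x < 4^Suc j"
  shows "(\<Sum>z<4^Suc j. Gn a0 a1 be j x z * Gn a0 a1 be j z x) = k^2 * be^2 * 1"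
proof -
  let ?h = "hsP (Suc j)" and ?u = "sg j x"
  have E1: "(\<Sum>z<4^Suc j. Gn a0 a1 be j x z * Gn a0 a1 be j z x)
     = (\<Sum>z<4^Suc j. (?h x z * P ?u (sg j z)) * (?h z x * P (sg j z) ?u))
       + (1 - P ?u ?u) * (?h x x * P ?u ?u) + (1 - P ?u ?u) * (?h x x * P ?u ?u)
       + (if x = x then (1 - P ?u ?u) * (1 - P ?u ?u) else 0)"
    unfolding Gn_split1[of a0 a1 be j x] Gn_split2[of a0 a1 be j _ x]
    by (rule sum_expand) (use x in auto)
  have E2: "(\<Sum>z<4^Suc j. (?h x z * P ?u (sg j z)) * (?h z x * P (sg j z) ?u))
      = (\<Sum>z<4^Suc j. ?h x z * ?h z x * (\<lambda>t. P ?u t * P t ?u) (sg j z))"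
    by (rule sum.cong) (simp_all add: ac_simps)
  have S: "(\<Sum>z<4^Suc j. ?h x z * ?h z x * (\<lambda>t. P ?u t * P t ?u) (sg j z))
     = (P ?u 1 * P 1 ?u + P ?u (-1) * P (-1) ?u)/2 * (if x = x then 4^Suc j else 0)
       - (P ?u 1 * P 1 ?u - P ?u (-1) * P (-1) ?u)/2 * 2^Suc j * ?u * ?u * ?h x x"
    by (rule SUMG[OF x x])
  have "(P ?u 1 * P 1 ?u + P ?u (-1) * P (-1) ?u)/2 * (if x = x then 4^Suc j else 0)
       - (P ?u 1 * P 1 ?u - P ?u (-1) * P (-1) ?u)/2 * 2^Suc j * ?u * ?u * ?h x x
       + (1 - P ?u ?u) * (?h x x * P ?u ?u) + (1 - P ?u ?u) * (?h x x * P ?u ?u)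
       + (if x = x then (1 - P ?u ?u) * (1 - P ?u ?u) else 0)
     = (P ?u 1 * P 1 ?u + P ?u (-1) * P (-1) ?u)/2 * k^2
       - (P ?u 1 * P 1 ?u - P ?u (-1) * P (-1) ?u)/2 * k * ?u * ?u * 1
       + (1 - P ?u ?u) * (1 * P ?u ?u) + (1 - P ?u ?u) * (1 * P ?u ?u) + (1 - P ?u ?u) * (1 - P ?u ?u)"
    by (simp only: hsP_diag if_True refl pow4 kk[symmetric])
  also have "\<dots> = k^2 * be^2 * 1" by (rule G_diag[OF sg_pm])
  finally show ?thesis unfolding E1 E2 S .
qed

lemma G2o:
  assumes kk: "k = 2^Suc j" and xy: "x < 4^Suc j" "y < 4^Suc j" "x \<noteq> y"
  shows "(\<Sum>z<4^Suc j. Gn a0 a1 be j x z * Gn a0 a1 be j z y) = k^2 * be^2 * (hsP (Suc j) x y * P (sg j x) (sg j y))"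
proof -
  let ?h = "hsP (Suc j)" and ?u = "sg j x" and ?v = "sg j y"
  have E1: "(\<Sum>z<4^Suc j. Gn a0 a1 be j x z * Gn a0 a1 be j z y)
     = (\<Sum>z<4^Suc j. (?h x z * P ?u (sg j z)) * (?h z y * P (sg j z) ?v))
       + (1 - P ?u ?u) * (?h x y * P ?u ?v) + (1 - P ?v ?v) * (?h x y * P ?u ?v)
       + (if x = y then (1 - P ?u ?u) * (1 - P ?v ?v) else 0)"
    unfolding Gn_split1[of a0 a1 be j x] Gn_split2[of a0 a1 be j _ y]
    by (rule sum_expand) (use xy in auto)
  have E2: "(\<Sum>z<4^Suc j. (?h x z * P ?u (sg j z)) * (?h z y * P (sg j z) ?v))
      = (\<Sum>z<4^Suc j. ?h x z * ?h z y * (\<lambda>t. P ?u t * P t ?v) (sg j z))"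
    by (rule sum.cong) (simp_all add: ac_simps)
  have S: "(\<Sum>z<4^Suc j. ?h x z * ?h z y * (\<lambda>t. P ?u t * P t ?v) (sg j z))
     = (P ?u 1 * P 1 ?v + P ?u (-1) * P (-1) ?v)/2 * (if x = y then 4^Suc j else 0)
       - (P ?u 1 * P 1 ?v - P ?u (-1) * P (-1) ?v)/2 * 2^Suc j * ?u * ?v * ?h x y"
    by (rule SUMG[OF xy(1,2)])
  have "(P ?u 1 * P 1 ?v + P ?u (-1) * P (-1) ?v)/2 * (if x = y then 4^Suc j else 0)
       - (P ?u 1 * P 1 ?v - P ?u (-1) * P (-1) ?v)/2 * 2^Suc j * ?u * ?v * ?h x y
       + (1 - P ?u ?u) * (?h x y * P ?u ?v) + (1 - P ?v ?v) * (?h x y * P ?u ?v)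
       + (if x = y then (1 - P ?u ?u) * (1 - P ?v ?v) else 0)
     = (P ?u 1 * P 1 ?v + P ?u (-1) * P (-1) ?v)/2 * 0
       - (P ?u 1 * P 1 ?v - P ?u (-1) * P (-1) ?v)/2 * k * ?u * ?v * ?h x y
       + (1 - P ?u ?u) * (?h x y * P ?u ?v) + (1 - P ?v ?v) * (?h x y * P ?u ?v) + 0"
    by (simp only: xy(3) if_False kk[symmetric])
  also have "\<dots> = k^2 * be^2 * (?h x y * P ?u ?v)" by (rule G_off[OF sg_pm sg_pm])
  finally show ?thesis unfolding E1 E2 S .
qed

lemma G2:
  assumes kk: "k = 2^Suc j" and xy: "x < 4^Suc j" "y < 4^Suc j"
  shows "(\<Sum>z<4^Suc j. Gn a0 a1 be j x z * Gn a0 a1 be j z y) = k^2 * be^2 * Gn a0 a1 be j x y"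
proof (cases "x = y")
  case True
  then show ?thesis using G2d[OF kk xy(1)] by (simp add: Gn_def)
next
  case False
  then show ?thesis using G2o[OF kk xy False] by (simp add: Gn_def)
qed

lemma A2d:
  assumes kk: "k = 2^Suc j" and x: "x < 4^Suc j"
  shows "(\<Sum>z<4^Suc j. En j x z * W (sg j z) * Gn a0 a1 be j z x) = mu * 1"
proof -
  let ?h = "hsP (Suc j)" and ?u = "sg j x"
  have E1: "(\<Sum>z<4^Suc j. En j x z * W (sg j z) * Gn a0 a1 be j z x)
     = (\<Sum>z<4^Suc j. (?h x z * (phiE ?u (sg j z) * W (sg j z))) * (?h z x * P (sg j z) ?u))
       + ((1 - phiE ?u ?u) * W ?u) * (?h x x * P ?u ?u) + (1 - P ?u ?u) * (?h x x * (phiE ?u ?u * W ?u))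
       + (if x = x then ((1 - phiE ?u ?u) * W ?u) * (1 - P ?u ?u) else 0)"
    unfolding En_split[of j x] Gn_split2[of a0 a1 be j _ x]
    by (rule sum_expand) (use x in auto)
  have E2: "(\<Sum>z<4^Suc j. (?h x z * (phiE ?u (sg j z) * W (sg j z))) * (?h z x * P (sg j z) ?u))
      = (\<Sum>z<4^Suc j. ?h x z * ?h z x * (\<lambda>t. phiE ?u t * W t * P t ?u) (sg j z))"
    by (rule sum.cong) (simp_all add: ac_simps)
  have S: "(\<Sum>z<4^Suc j. ?h x z * ?h z x * (\<lambda>t. phiE ?u t * W t * P t ?u) (sg j z))
     = (phiE ?u 1 * W 1 * P 1 ?u + phiE ?u (-1) * W (-1) * P (-1) ?u)/2 * (if x = x then 4^Suc j else 0)
       - (phiE ?u 1 * W 1 * P 1 ?u - phiE ?u (-1) * W (-1) * P (-1) ?u)/2 * 2^Suc j * ?u * ?u * ?h x x"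
    by (rule SUMG[OF x x])
  have "(phiE ?u 1 * W 1 * P 1 ?u + phiE ?u (-1) * W (-1) * P (-1) ?u)/2 * (if x = x then 4^Suc j else 0)
       - (phiE ?u 1 * W 1 * P 1 ?u - phiE ?u (-1) * W (-1) * P (-1) ?u)/2 * 2^Suc j * ?u * ?u * ?h x x
       + ((1 - phiE ?u ?u) * W ?u) * (?h x x * P ?u ?u) + (1 - P ?u ?u) * (?h x x * (phiE ?u ?u * W ?u))
       + (if x = x then ((1 - phiE ?u ?u) * W ?u) * (1 - P ?u ?u) else 0)
     = (phiE ?u 1 * W 1 * P 1 ?u + phiE ?u (-1) * W (-1) * P (-1) ?u)/2 * k^2
       - (phiE ?u 1 * W 1 * P 1 ?u - phiE ?u (-1) * W (-1) * P (-1) ?u)/2 * k * ?u * ?u * 1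
       + ((1 - phiE ?u ?u) * W ?u) * (1 * P ?u ?u) + (1 - P ?u ?u) * (1 * (phiE ?u ?u * W ?u))
       + ((1 - phiE ?u ?u) * W ?u) * (1 - P ?u ?u)"
    by (simp only: hsP_diag if_True refl pow4 kk[symmetric])
  also have "\<dots> = mu * 1" by (rule A_diag[OF sg_pm])
  finally show ?thesis unfolding E1 E2 S .
qed

lemma A2o:
  assumes kk: "k = 2^Suc j" and xy: "x < 4^Suc j" "y < 4^Suc j" "x \<noteq> y"
  shows "(\<Sum>z<4^Suc j. En j x z * W (sg j z) * Gn a0 a1 be j z y) = mu * (hsP (Suc j) x y * P (sg j x) (sg j y))"
proof -
  let ?h = "hsP (Suc j)" and ?u = "sg j x" and ?v = "sg j y"
  have E1: "(\<Sum>z<4^Suc j. En j x z * W (sg j z) * Gn a0 a1 be j z y)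
     = (\<Sum>z<4^Suc j. (?h x z * (phiE ?u (sg j z) * W (sg j z))) * (?h z y * P (sg j z) ?v))
       + ((1 - phiE ?u ?u) * W ?u) * (?h x y * P ?u ?v) + (1 - P ?v ?v) * (?h x y * (phiE ?u ?v * W ?v))
       + (if x = y then ((1 - phiE ?u ?u) * W ?u) * (1 - P ?v ?v) else 0)"
    unfolding En_split[of j x] Gn_split2[of a0 a1 be j _ y]
    by (rule sum_expand) (use xy in auto)
  have E2: "(\<Sum>z<4^Suc j. (?h x z * (phiE ?u (sg j z) * W (sg j z))) * (?h z y * P (sg j z) ?v))
      = (\<Sum>z<4^Suc j. ?h x z * ?h z y * (\<lambda>t. phiE ?u t * W t * P t ?v) (sg j z))"
    by (rule sum.cong) (simp_all add: ac_simps)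
  have S: "(\<Sum>z<4^Suc j. ?h x z * ?h z y * (\<lambda>t. phiE ?u t * W t * P t ?v) (sg j z))
     = (phiE ?u 1 * W 1 * P 1 ?v + phiE ?u (-1) * W (-1) * P (-1) ?v)/2 * (if x = y then 4^Suc j else 0)
       - (phiE ?u 1 * W 1 * P 1 ?v - phiE ?u (-1) * W (-1) * P (-1) ?v)/2 * 2^Suc j * ?u * ?v * ?h x y"
    by (rule SUMG[OF xy(1,2)])
  have "(phiE ?u 1 * W 1 * P 1 ?v + phiE ?u (-1) * W (-1) * P (-1) ?v)/2 * (if x = y then 4^Suc j else 0)
       - (phiE ?u 1 * W 1 * P 1 ?v - phiE ?u (-1) * W (-1) * P (-1) ?v)/2 * 2^Suc j * ?u * ?v * ?h x y
       + ((1 - phiE ?u ?u) * W ?u) * (?h x y * P ?u ?v) + (1 - P ?v ?v) * (?h x y * (phiE ?u ?v * W ?v))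
       + (if x = y then ((1 - phiE ?u ?u) * W ?u) * (1 - P ?v ?v) else 0)
     = (phiE ?u 1 * W 1 * P 1 ?v + phiE ?u (-1) * W (-1) * P (-1) ?v)/2 * 0
       - (phiE ?u 1 * W 1 * P 1 ?v - phiE ?u (-1) * W (-1) * P (-1) ?v)/2 * k * ?u * ?v * ?h x y
       + ((1 - phiE ?u ?u) * W ?u) * (?h x y * P ?u ?v) + (1 - P ?v ?v) * (?h x y * (phiE ?u ?v * W ?v)) + 0"
    by (simp only: xy(3) if_False kk[symmetric])
  also have "\<dots> = mu * (?h x y * P ?u ?v)" by (rule A_off[OF sg_pm sg_pm])
  finally show ?thesis unfolding E1 E2 S .
qed

lemma A2:
  assumes kk: "k = 2^Suc j" and xy: "x < 4^Suc j" "y < 4^Suc j"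
  shows "(\<Sum>z<4^Suc j. En j x z * W (sg j z) * Gn a0 a1 be j z y) = mu * Gn a0 a1 be j x y"
proof (cases "x = y")
  case True
  then show ?thesis using A2d[OF kk xy(1)] by (simp add: Gn_def)
next
  case False
  then show ?thesis using A2o[OF kk xy False] by (simp add: Gn_def)
qed

lemma Wsum:
  assumes kk: "k = 2^Suc j"
  shows "(\<Sum>z<4^Suc j. W (sg j z)) = (wa + wb)/2 * k^2 - (wa - wb)/2 * k"
proof -
  have "(\<Sum>z<4^Suc j. W (sg j z)) = (\<Sum>z<4^Suc j. hsP (Suc j) 0 z * hsP (Suc j) z 0 * W (sg j z))"
    by (simp add: hsP_0 hsP_sym[of _ _ 0])
  also have "\<dots> = (W 1 + W (-1))/2 * k^2 - (W 1 - W (-1))/2 * k"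
    using SUMG[of 0 j 0 W] unfolding pow4 kk[symmetric] by (simp add: sg_0 hsP_0)
  finally show ?thesis by (simp add: wt_def)
qed

end




lemma pow_facts:
  fixes j :: nat
  assumes "s = Suc j"
  shows "(2::real)^(2 * s) = (2^Suc j)^2" "(2::real)^(3 * s) = (2^Suc j)^3"
        "(2::real)^(s-1) = 2^Suc j / 2" "(2::real)^(2 * s - 1) = (2^Suc j)^2/2" "(2::real)^s = 2^Suc j"
proof -
  show 1: "(2::real)^(2 * s) = (2^Suc j)^2" unfolding assms by (metis power_mult mult.commute)
  show "(2::real)^(3 * s) = (2^Suc j)^3" unfolding assms by (metis power_mult mult.commute)
  show "(2::real)^(s-1) = 2^Suc j / 2" unfolding assms by simp
  show "(2::real)^s = 2^Suc j" using assms by simp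
  have e1: "2 * s - 1 = Suc (2*j)" "2 * s = Suc (Suc (2*j))" using assms by auto
  show "(2::real)^(2 * s - 1) = (2^Suc j)^2/2"
    using 1 unfolding e1 by simp
qed

lemma nat_m:
  fixes s :: nat
  shows "real (((2::nat)^(2 * s) - 1) div 3) = ((2::real)^(2 * s) - 1)/3"
proof -
  have m4: "(4::nat)^s mod 3 = 1"
    by (induction s) (simp_all add: mod_mult_right_eq[symmetric])
  define q where "q = (4::nat)^s div 3"
  have e4: "(4::nat)^s = 3 * q + 1" using m4 unfolding q_def by (metis div_mult_mod_eq mult.commute)
  have e: "(2::nat)^(2 * s) = 4^s" by (simp add: power_mult)
  have "((2::nat)^(2 * s) - 1) div 3 = q" unfolding e e4 by simp
  moreover have "(2::real)^(2 * s) = real ((4::nat)^s)" by (simp add: power_mult)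
  ultimately show ?thesis unfolding e4 by simp
qed

lemma sqrt_le_of_sq: "0 \<le> t \<Longrightarrow> x \<le> t^2 \<Longrightarrow> sqrt x \<le> t"
  by (metis real_sqrt_le_mono real_sqrt_abs abs_of_nonneg)

theorem mainTheorem6:
  fixes s :: nat
  assumes "s \<ge> 2" and "CARD('n::finite) = 4 ^ s"
  shows "max_proj_const (((2::nat) ^ (2 * s) - 1) div 3) (TYPE('n))
     \<ge> (2 ^ (2 * s) - 1) / (2 ^ (3 * s) - 3 * 2 ^ (s - 1) + 1)
        * ((2 ^ (2 * s - 1) + 2 ^ s - 1) / 3
           + 2 ^ (s - 1) * sqrt (real (((2::nat) ^ (2 * s) - 1) div 3)))"
proof -
  obtain j where sj: "s = Suc j" and j1: "1 \<le> j" using assms(1) by (cases s) auto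
  define k :: real where "k = 2^Suc j"
  have k4: "4 \<le> k"
  proof -
    have "(2::real)^2 \<le> 2^Suc j" by (rule power_increasing) (use j1 in auto)
    then show ?thesis by (simp add: k_def)
  qed
  define m :: real where "m = (k^2 - 1)/3"
  have k16: "16 \<le> k^2"
  proof -
    have "(4::real)^2 \<le> k^2" using k4 by (intro power_mono) auto
    then show ?thesis by simp
  qed
  have k3: "16 * k \<le> k^3"
  proof -
    have "k * 16 \<le> k * k^2" using k16 k4 by (intro mult_left_mono) auto
    then show ?thesis by (simp add: power2_eq_square power3_eq_cube mult.commute)
  qed
  have m0: "0 < m" using k16 unfolding m_def by simp
  define r where "r = sqrt m"
  have r0: "0 < r" using m0 by (simp add: r_def)
  have rr: "r^2 = m" using m0 by (simp add: r_def)
  define a0 :: real where "a0 = 1/(k+1)"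
  define a1 :: real where "a1 = 1/(k-1)"
  define be :: real where "be = 1/r"
  define wa where "wa = k*(k+1)/2 - (2+k/2)*r"
  define wb where "wb = k*(k-1)/2 - (k/2)*r"
  define mu where "mu = wa*k/2 + wb*(k*(k+1)/2)*be"
  interpret kdat k r a0 a1 be wa wb mu
  proof
    show "a0 * (k + 1) = 1" using k4 by (simp add: a0_def)
    show "a1 * (k - 1) = 1" using k4 by (simp add: a1_def)
    show "be * r = 1" using r0 by (simp add: be_def)
    show "3 * r^2 = k^2 - 1" using rr by (simp add: m_def)
  qed (simp_all add: wa_def wb_def mu_def)
  have wb0: "0 \<le> wb"
  proof -
    have "(k-1)^2 - (k^2-1)/3 = 2*(k-1)*(k-2)/3" by (simp add: power2_eq_square field_simps)
    moreover have "0 \<le> 2*(k-1)*(k-2)/3" using k4 by simp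
    ultimately have "(k^2-1)/3 \<le> (k-1)^2" by linarith
    then have "r \<le> k - 1" unfolding r_def m_def
      by (intro sqrt_le_of_sq) (use k4 in auto)
    then have "k*r \<le> k*(k-1)" using k4 by (intro mult_left_mono) auto
    then have "k*r \<le> k*k - k" by (simp add: algebra_simps)
    then show ?thesis unfolding wb_def by (simp add: field_simps)
  qed
  have wa0: "0 \<le> wa"
  proof -
    have "r \<le> k*(k+1)/(k+4)" unfolding r_def m_def
    proof (rule sqrt_le_of_sq)
      show "0 \<le> k*(k+1)/(k+4)" using k4 by simp
      have "(k^2-1)*(k+4)^2 \<le> 3*(k*(k+1))^2"
      proof -
        have "3*(k*(k+1))^2 - (k^2-1)*(k+4)^2 = (k+1)*(2*(k-2)^2*(k+2))"
          by (simp add: power2_eq_square algebra_simps)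
        also have "\<dots> \<ge> 0" using k4 by simp
        finally show ?thesis by simp
      qed
      then show "(k^2-1)/3 \<le> (k*(k+1)/(k+4))^2" using k4
        by (simp add: power_divide field_simps)
    qed
    then have "r*(k+4) \<le> k*(k+1)" using k4 by (simp add: field_simps)
    then show ?thesis unfolding wa_def by (simp add: algebra_simps)
  qed
  define S where "S = (wa + wb)/2 * k^2 - (wa - wb)/2 * k"
  have S0: "0 < S"
  proof -
    have SE: "S = (k/2) * (k*(k^2-1) - r*(k^2+2*k-2))"
      unfolding S_def wa_def wb_def by (simp add: power2_eq_square field_simps; algebra)
    have "r*(k^2+2*k-2) < k*(k^2-1)"
    proof (rule power_less_imp_less_base[of _ 2])
      show "0 \<le> k*(k^2-1)" using k4 k16 by simp
      have "(r*(k^2+2*k-2))^2 = (k^2-1)/3 * (k^2+2*k-2)^2"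
        by (simp add: power_mult_distrib rr m_def)
      also have "\<dots> < (k*(k^2-1))^2"
      proof -
        have pos: "0 < k^2 - 1" using m0 m_def by simp
        have "(k^2+2*k-2)^2 < 3*k^2*(k^2-1)"
        proof -
          have "3*k^2*(k^2-1) - (k^2+2*k-2)^2 = (k-2)*(2*k^3-3*k+2)"
            by (simp add: power2_eq_square power3_eq_cube algebra_simps)
          also have "\<dots> > 0"
          proof -
            have "2*k^3 - 3*k + 2 > 0" using k4 k3 by simp
            then show ?thesis using k4 by simp
          qed
          finally show ?thesis by simp
        qed
        then have "(k^2-1) * (k^2+2*k-2)^2 < (k^2-1) * (3*k^2*(k^2-1))"
          using pos by simp
        then show ?thesis by (simp add: power2_eq_square field_simps)
      qed
      finally show "(r*(k^2+2*k-2))^2 < (k*(k^2-1))^2" .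
    qed
    then show ?thesis unfolding SE using k4 by simp
  qed
  define N :: nat where "N = 4^Suc j"
  have cardN: "CARD('n) = N" using assms(2) sj N_def by simp
  obtain h :: "'n \<Rightarrow> nat" where bij: "bij_betw h UNIV {..<N}"
    using finite_same_card_bij[of "UNIV::'n set" "{..<N}"] cardN by auto
  have hN: "h i < 4^Suc j" for i using bij N_def by (auto simp: bij_betw_def)
  have reidx: "(\<Sum>i\<in>UNIV. f (h i)) = (\<Sum>z<4^Suc j. f z)" for f :: "nat \<Rightarrow> real"
    using sum.reindex_bij_betw[OF bij, of f] N_def by simp
  have kk: "k = 2^Suc j" by (simp add: k_def)
  define c where "c = k^2 * be^2"
  have c0: "0 < c" using k4 r0 by (simp add: c_def be_def)
  define Gt where "Gt i l = Gn a0 a1 be j (h i) (h l)" for i l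
  define Gm :: "real^'n^'n" where "Gm = (\<chi> i l. Gt i l)"
  have Gcomp: "(Gm *v v) $ i = (\<Sum>l\<in>UNIV. Gt i l * v $ l)" for v i
    by (simp add: matrix_vector_mult_def Gm_def)
  have GG: "(\<Sum>l\<in>UNIV. Gt i l * Gt l p) = c * Gt i p" for i p
  proof -
    have "(\<Sum>l\<in>UNIV. Gt i l * Gt l p) = (\<Sum>z<4^Suc j. Gn a0 a1 be j (h i) z * Gn a0 a1 be j z (h p))"
      unfolding Gt_def by (rule reidx)
    also have "\<dots> = c * Gt i p" unfolding c_def Gt_def by (rule G2[OF kk hN hN])
    finally show ?thesis .
  qed
  define Y where "Y = range (\<lambda>v. Gm *v v)"
  have subY: "subspace Y" unfolding Y_def
    by (rule linear_subspace_image[OF matrix_vector_mul_linear subspace_UNIV])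
  define P0 where "P0 = (\<lambda>v. ((1/c) *\<^sub>R Gm) *v v)"
  have P0comp: "P0 v $ i = (1/c) * (\<Sum>l\<in>UNIV. Gt i l * v $ l)" for v i
    by (simp add: P0_def matrix_vector_mult_def Gm_def sum_distrib_left mult.assoc)
  have P0proj: "is_projection_onto Y P0"
    unfolding is_projection_onto_def
  proof (intro conjI ballI subsetI)
    show "linear P0" unfolding P0_def by (rule matrix_vector_mul_linear)
  next
    fix z assume "z \<in> range P0"
    then obtain v where zv: "z = P0 v" by auto
    have "P0 v = Gm *v ((1/c) *\<^sub>R v)"
      by (simp add: vec_eq_iff P0comp Gcomp sum_distrib_left algebra_simps)
    then show "z \<in> Y" unfolding Y_def zv by auto
  next
    fix y assume "y \<in> Y"
    then obtain v where yv: "y = Gm *v v" unfolding Y_def by auto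
    have "P0 y $ i = y $ i" for i
    proof -
      have "(\<Sum>l\<in>UNIV. Gt i l * (\<Sum>p\<in>UNIV. Gt l p * v $ p)) = (\<Sum>p\<in>UNIV. (\<Sum>l\<in>UNIV. Gt i l * Gt l p) * v $ p)"
        by (simp add: sum_distrib_left sum_distrib_right mult.assoc) (rule sum.swap)
      also have "\<dots> = c * (\<Sum>p\<in>UNIV. Gt i p * v $ p)"
        by (simp add: GG sum_distrib_left mult.assoc)
      finally show ?thesis unfolding yv P0comp Gcomp using c0 by simp
    qed
    then show "P0 y = y" by (simp add: vec_eq_iff)
  qed
  have Gdiag: "Gt i i = 1" for i by (simp add: Gt_def Gn_def)
  have trP0: "(\<Sum>i\<in>UNIV. P0 (axis i 1) $ i) = real N / c"
  proof -
    have "P0 (axis i 1) $ i = 1/c" for i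
    proof -
      have "(\<Sum>l\<in>UNIV. Gt i l * axis i 1 $ l) = (\<Sum>l\<in>UNIV. if l = i then Gt i i else 0)"
        by (rule sum.cong) (auto simp: axis_def)
      also have "\<dots> = 1" by (simp add: Gdiag)
      finally show ?thesis by (simp add: P0comp)
    qed
    then show ?thesis using cardN by simp
  qed
  have realN: "real N = k^2"
  proof -
    have "real N = (4::real)^Suc j" by (simp add: N_def)
    also have "\<dots> = (2^Suc j)^2" by (rule pow4)
    finally show ?thesis by (simp add: k_def)
  qed
  have dimY: "real (dim Y) = m"
  proof -
    have "real (dim Y) = real N / c" using trace_proj[OF subY P0proj] trP0 by simp
    also have "\<dots> = 1 / be^2" unfolding realN c_def using k4 by (simp add: field_simps)
    also have "\<dots> = m" using rr r0 by (simp add: be_def power_one_over)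
    finally show ?thesis .
  qed
  have mnat: "real (((2::nat) ^ (2 * s) - 1) div 3) = m"
    unfolding nat_m pow_facts(1)[OF sj] m_def k_def ..
  have dimY': "dim Y = ((2::nat) ^ (2 * s) - 1) div 3"
    using dimY mnat by (metis of_nat_eq_iff)
  define Em where "Em i l = En j (h i) (h l)" for i l
  define cw where "cw l = wt wa wb (sg j (h l)) / S" for l
  have Eb: "\<bar>Em i l\<bar> \<le> 1" for i l
  proof -
    have "\<bar>hsP (Suc j) x y\<bar> = 1" for x y using hsP_pm[of "Suc j" x y] by auto
    moreover have "\<bar>phiE u v\<bar> = 1" for u v by (simp add: phiE_def)
    ultimately show ?thesis by (simp add: Em_def En_def abs_mult)
  qed
  have cw0: "0 \<le> cw l" for l using wa0 wb0 S0 by (simp add: cw_def wt_def)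
  have cwsum: "(\<Sum>l\<in>UNIV. cw l) = 1"
  proof -
    have "(\<Sum>l\<in>UNIV. cw l) = (\<Sum>l\<in>UNIV. wt wa wb (sg j (h l))) / S"
      by (simp add: cw_def sum_divide_distrib)
    also have "(\<Sum>l\<in>UNIV. wt wa wb (sg j (h l))) = S"
      using reidx[of "\<lambda>z. wt wa wb (sg j z)"] Wsum[OF kk] by (simp add: S_def)
    finally show ?thesis using S0 by simp
  qed
  have EG: "(\<Sum>l\<in>UNIV. Em i l * cw l * Gt l p) = (mu / S) * Gt i p" for i p
  proof -
    have "(\<Sum>l\<in>UNIV. Em i l * cw l * Gt l p) = (\<Sum>l\<in>UNIV. En j (h i) (h l) * wt wa wb (sg j (h l)) * Gn a0 a1 be j (h l) (h p)) / S"
      by (simp add: Em_def cw_def Gt_def sum_divide_distrib)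
    also have "(\<Sum>l\<in>UNIV. En j (h i) (h l) * wt wa wb (sg j (h l)) * Gn a0 a1 be j (h l) (h p))
        = (\<Sum>z<4^Suc j. En j (h i) z * wt wa wb (sg j z) * Gn a0 a1 be j z (h p))"
      by (rule reidx)
    also have "\<dots> = mu * Gt i p" unfolding Gt_def by (rule A2[OF kk hN hN])
    finally show ?thesis by simp
  qed
  have inv: "(\<Sum>l\<in>UNIV. Em i l * cw l * y $ l) = (mu / S) * y $ i" if "y \<in> Y" for y i
  proof -
    obtain v where yv: "y = Gm *v v" using \<open>y \<in> Y\<close> unfolding Y_def by auto
    have "(\<Sum>l\<in>UNIV. Em i l * cw l * (\<Sum>p\<in>UNIV. Gt l p * v $ p))
        = (\<Sum>p\<in>UNIV. (\<Sum>l\<in>UNIV. Em i l * cw l * Gt l p) * v $ p)"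
      by (simp add: sum_distrib_left sum_distrib_right mult.assoc) (rule sum.swap)
    also have "\<dots> = (mu / S) * (\<Sum>p\<in>UNIV. Gt i p * v $ p)"
      unfolding EG by (simp add: sum_distrib_left mult.assoc)
    finally show ?thesis unfolding yv Gcomp .
  qed
  have lb: "(mu / S) * real (dim Y) \<le> proj_const Y"
    by (rule lower_bound_lemma[OF subY Eb cw0 cwsum inv]) (use P0proj in auto)
  have ub: "proj_const Y \<le> max_proj_const (((2::nat) ^ (2 * s) - 1) div 3) (TYPE('n))"
    unfolding max_proj_const_def
    by (rule cSup_upper) (use subY dimY' bdd_max_proj in auto)
  define D where "D = k^3 - 3*(k/2) + 1"
  have D0: "0 < D" using k3 k4 by (simp add: D_def)
  have val: "(k^2-1) * ((k^2/2 + k - 1)/3 + k/2 * r) * S = mu * m * D"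
    unfolding S_def mu_def wa_def wb_def m_def D_def using hb hr
    by (simp add: field_simps power2_eq_square power3_eq_cube; algebra)
  have rhs: "(2 ^ (2 * s) - 1) / (2 ^ (3 * s) - 3 * 2 ^ (s - 1) + 1)
        * ((2 ^ (2 * s - 1) + 2 ^ s - 1) / 3
           + 2 ^ (s - 1) * sqrt (real (((2::nat) ^ (2 * s) - 1) div 3))) = (mu / S) * m"
  proof -
    have "(2 ^ (2 * s) - 1) / (2 ^ (3 * s) - 3 * 2 ^ (s - 1) + 1)
        * ((2 ^ (2 * s - 1) + 2 ^ s - 1) / 3
           + 2 ^ (s - 1) * sqrt (real (((2::nat) ^ (2 * s) - 1) div 3)))
        = (k^2-1) / D * ((k^2/2 + k - 1)/3 + k/2 * r)"
      unfolding pow_facts[OF sj] mnat D_def r_def k_def by simp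
    also have "\<dots> = (mu / S) * m" using val D0 S0 by (simp add: field_simps)
    finally show ?thesis .
  qed
  show ?thesis unfolding rhs using lb ub dimY by simp
qed


end
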